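(* Let $f_1,g_1:\mathbb{R}^n\to\Delta_k$ be measurable. Then there exist explicitly defined $f_2,g_2:\mathbb{R}^{n+2}\to[k]$ (with $[k]$ identified with $\{\mathbf{e}_1,\dots,\mathbf{e}_k\}\subset\mathbb{R}^k$) such that (1) $\mathbf{E}[f_2]=\mathbf{E}[f_1]$ and $\mathbf{E}[g_2]=\mathbf{E}[g_1]$; (2) for every $t\ge 0$ and all $1\le j,\ell\le k$, $\mathbf{E}[f_{1,j}\,P_t g_{1,\ell}]=\mathbf{E}[f_{2,j}\,P_t g_{2,\ell}]$. Further, $f_2$ depends only on $f_1$ and $g_2$ depends only on $g_1$.
   Context: $\Delta_k$ is the convex hull of the standard unit vectors $\mathbf{e}_1,\dots,\mathbf{e}_k$ of $\mathbb{R}^k$. All expectations are with respect to the standard Gaussian measure $\gamma_m$ on the relevant space $\mathbb{R}^m$ ($m=n$ or $m=n+2$). For a function $h=(h_1,\dots,h_k):\mathbb{R}^m\to\mathbb{R}^k$, $h_j$ denotes its $j$-th coordinate. The Ornstein–Uhlenbeck operator is $(P_t h)(x)=\int h(e^{-t}x+\sqrt{1-e^{-2t}}\,y)\,d\gamma_m(y)$. *)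

theory Defs
  imports "HOL-Analysis.Analysis"
begin

definition std_gauss :: "'a::euclidean_space measure" where
  "std_gauss = density lborel
     (\<lambda>x. ennreal ((2 * pi) powr (- real DIM('a) / 2) * exp (- (norm x)\<^sup>2 / 2)))"

definition OU :: "real \<Rightarrow> ('a::euclidean_space \<Rightarrow> real) \<Rightarrow> 'a \<Rightarrow> real" where
  "OU t h x = (\<integral>y. h (exp (- t) *\<^sub>R x + sqrt (1 - exp (- 2 * t)) *\<^sub>R y) \<partial>std_gauss)"

definition simplex_k :: "(real ^ 'k::finite) set" where
  "simplex_k = convex hull (range (\<lambda>i. axis i 1))"

definition vertices_k :: "(real ^ 'k::finite) set" where
  "vertices_k = range (\<lambda>i. axis i 1)"

end

theory Submission
  imports Defs "HOL-Probability.Probability"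
begin


definition gd1 :: "real \<Rightarrow> real" where "gd1 u = (2*pi) powr (-1/2) * exp (-u\<^sup>2/2)"

lemma gd1_normal: "gd1 u = normal_density 0 1 u"
  unfolding gd1_def normal_density_def
  by (simp add: powr_minus_divide powr_half_sqrt)

lemma gd1_meas[measurable]: "gd1 \<in> borel_measurable borel"
  unfolding gd1_def by measurable

lemma gd1_nonneg: "0 \<le> gd1 u" by (simp add: gd1_def)

lemma std_gauss_dens:
  fixes x :: "'a::euclidean_space"
  shows "(2*pi) powr - (real DIM('a)/2) * exp(-((norm x)\<^sup>2/2)) = (\<Prod>b\<in>Basis. gd1 (x\<bullet>b))"
proof -
  have n: "(norm x)\<^sup>2 = (\<Sum>b\<in>Basis. (x\<bullet>b)\<^sup>2)"
  proof -
    have "(norm x)\<^sup>2 = x\<bullet>x" by (rule power2_norm_eq_inner)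
    also have "\<dots> = (\<Sum>b\<in>Basis. (x\<bullet>b) * (x \<bullet> b))" by (rule euclidean_inner)
    also have "\<dots> = (\<Sum>b\<in>Basis. (x\<bullet>b)\<^sup>2)" by (simp only: power2_eq_square)
    finally show ?thesis .
  qed
  have e: "exp(-(\<Sum>b\<in>Basis. (x\<bullet>b)\<^sup>2)/2) = (\<Prod>b\<in>Basis. exp (-(x\<bullet>b)\<^sup>2/2))"
    by (simp add: exp_sum[symmetric] sum_negf sum_divide_distrib)
  have p1: "(\<Prod>b\<in>(Basis::'a set). (2*pi) powr (-1/2::real)) = ((2*pi) powr (-1/2::real)) ^ DIM('a)"
    by simp
  have p2: "((2*pi) powr (-1/2::real)) ^ DIM('a) = (2*pi) powr (real DIM('a) * (-1/2))"
    by (rule powr_power) simp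
  have p3: "real DIM('a) * (-1/2) = - (real DIM('a)/2)" by simp
  have g: "(\<Prod>b\<in>Basis. gd1 (x\<bullet>b)) = (\<Prod>b\<in>(Basis::'a set). (2*pi) powr (-1/2::real)) * (\<Prod>b\<in>Basis. exp (-(x\<bullet>b)\<^sup>2/2))"
    unfolding gd1_def by (rule prod.distrib)
  have m: "-((norm x)\<^sup>2/2) = -(\<Sum>b\<in>Basis. (x\<bullet>b)\<^sup>2)/2" unfolding n by simp
  show ?thesis unfolding g p1 p2 p3 m e ..
qed

lemma nn_gd1: "(\<integral>\<^sup>+u. ennreal (gd1 u) \<partial>lborel) = 1"
proof -
  interpret prob_space "density lborel (\<lambda>x. ennreal (normal_density 0 1 x))"
    by (rule prob_space_normal_density) simp
  have "emeasure (density lborel (\<lambda>x. ennreal (normal_density 0 1 x))) UNIV = 1"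
    using emeasure_space_1 by simp
  then show ?thesis by (simp add: emeasure_density gd1_normal)
qed

lemma sets_std_gauss[simp, measurable_cong]: "sets (std_gauss :: 'a::euclidean_space measure) = sets borel"
  by (simp add: std_gauss_def)

lemma space_std_gauss[simp]: "space (std_gauss :: 'a::euclidean_space measure) = UNIV"
  by (simp add: std_gauss_def)

lemma emeasure_std_gauss_UNIV: "emeasure (std_gauss :: 'a::euclidean_space measure) UNIV = 1"
proof -
  have "emeasure (std_gauss :: 'a measure) UNIV = (\<integral>\<^sup>+(x::'a). ennreal ((2*pi) powr - (real DIM('a)/2) * exp(-((norm x)\<^sup>2/2))) \<partial>lborel)"
    unfolding std_gauss_def by (subst emeasure_density) auto
  also have "\<dots> = (\<integral>\<^sup>+(x::'a). (\<Prod>b\<in>Basis. ennreal (gd1 (x\<bullet>b))) \<partial>lborel)"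
    by (rule nn_integral_cong) (simp add: std_gauss_dens prod_ennreal gd1_nonneg)
  also have "\<dots> = (\<Prod>b\<in>(Basis::'a set). (\<integral>\<^sup>+u. ennreal (gd1 u) \<partial>lborel))"
    by (rule nn_integral_lborel_prod) auto
  finally show ?thesis by (simp add: nn_gd1)
qed

lemma prob_std_gauss: "prob_space (std_gauss :: 'a::euclidean_space measure)"
  by (rule prob_spaceI) (simp add: emeasure_std_gauss_UNIV)



lemma sf_std_gauss: "sigma_finite_measure (std_gauss :: 'a::euclidean_space measure)"
  by (rule prob_space_imp_sigma_finite[OF prob_std_gauss])

lemma std_gauss_prod:
  "(std_gauss :: ('a::euclidean_space \<times> 'b::euclidean_space) measure) =
     (std_gauss :: 'a measure) \<Otimes>\<^sub>M (std_gauss :: 'b measure)"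
proof -
  define f where "f = (\<lambda>x::'a. ennreal ((2 * pi) powr (- real DIM('a) / 2) * exp (- (norm x)\<^sup>2 / 2)))"
  define g where "g = (\<lambda>x::'b. ennreal ((2 * pi) powr (- real DIM('b) / 2) * exp (- (norm x)\<^sup>2 / 2)))"
  have sa: "(std_gauss :: 'a measure) = density lborel f" unfolding std_gauss_def f_def ..
  have sb: "(std_gauss :: 'b measure) = density lborel g" unfolding std_gauss_def g_def ..
  have fm: "f \<in> borel_measurable lborel" unfolding f_def by measurable
  have gm: "g \<in> borel_measurable lborel" unfolding g_def by measurable
  have sfg: "sigma_finite_measure (density lborel g)" using sf_std_gauss[where 'a='b] unfolding sb .
  have "(std_gauss :: 'a measure) \<Otimes>\<^sub>M (std_gauss :: 'b measure) = density (lborel \<Otimes>\<^sub>M lborel) (\<lambda>(x,y). f x * g y)"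
    unfolding sa sb
    by (rule pair_measure_density[OF fm gm lborel.sigma_finite_measure_axioms sfg])
  also have "\<dots> = density lborel (\<lambda>(x,y). f x * g y)" by (simp only: lborel_prod)
  also have "\<dots> = std_gauss"
    unfolding std_gauss_def
  proof (rule arg_cong[where f="density lborel"], rule ext)
    fix z :: "'a \<times> 'b"
    obtain x y where z: "z = (x,y)" by (cases z)
    have n: "(norm (x,y))\<^sup>2 = (norm x)\<^sup>2 + (norm y)\<^sup>2" by (simp add: norm_Pair)
    have p: "(2 * pi) powr (- real (DIM('a) + DIM('b)) / 2) = (2 * pi) powr (- real DIM('a) / 2) * (2 * pi) powr (- real DIM('b) / 2)"
      by (simp add: powr_add[symmetric] add_divide_distrib diff_divide_distrib)
    have e: "exp (- ((norm x)\<^sup>2 + (norm y)\<^sup>2) / 2) = exp (- (norm x)\<^sup>2 / 2) * exp (- (norm y)\<^sup>2 / 2)"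
      by (simp add: exp_add[symmetric] add_divide_distrib)
    show "(case z of (x, y) \<Rightarrow> f x * g y) = ennreal ((2 * pi) powr (- real DIM('a \<times> 'b) / 2) * exp (- (norm z)\<^sup>2 / 2))"
      unfolding z f_def g_def DIM_prod n p e
      by (simp add: ennreal_mult[symmetric] mult_ac)
  qed
  finally show ?thesis ..
qed



lemma real_dist_gauss: "real_distribution (std_gauss :: real measure)"
  unfolding real_distribution_def real_distribution_axioms_def using prob_std_gauss by simp

lemma gauss_atom: "measure (std_gauss :: real measure) {x} = 0"
proof -
  have "{x} \<in> null_sets (std_gauss :: real measure)"
    unfolding std_gauss_def
    by (subst null_sets_density_iff) (auto intro: AE_mp[OF AE_lborel_singleton[of x]])
  then show ?thesis by (rule measure_eq_0_null_sets)
qed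

lemma cdf_uniform:
  fixes s :: real
  assumes s0: "0 \<le> s" and s1: "s \<le> 1"
  shows "measure (std_gauss :: real measure) {u. cdf std_gauss u \<le> s} = s"
proof -
  interpret real_distribution "std_gauss :: real measure" by (rule real_dist_gauss)
  let ?G = "cdf (std_gauss :: real measure)"
  have cont: "continuous_on UNIV ?G"
    using isCont_cdf gauss_atom by (simp add: continuous_on_eq_continuous_at)
  show ?thesis
  proof (cases "s = 1")
    case True
    then have "{u. ?G u \<le> s} = space std_gauss" using cdf_bounded_prob by auto
    then show ?thesis using True prob_space by simp
  next
    case False
    with s1 have sl: "s < 1" by simp
    have "eventually (\<lambda>u. s < ?G u) at_top"
      using order_tendstoD(1)[OF cdf_lim_at_top_prob sl] .
    then obtain b where b: "\<And>u. u \<ge> b \<Longrightarrow> s < ?G u" by (auto simp: eventually_at_top_linorder)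
    define C where "C = {u. ?G u \<le> s}"
    have bdd: "u \<le> b" if uC: "u \<in> C" for u
    proof (rule ccontr)
      assume "\<not> u \<le> b"
      then have "b \<le> u" by simp
      then have "s < ?G u" by (rule b)
      with uC show False by (simp add: C_def)
    qed
    show ?thesis
    proof (cases "C = {}")
      case True
      have "s \<le> ?G u" for u
      proof -
        have "u \<notin> C" using True by simp
        then show ?thesis unfolding C_def by simp
      qed
      then have "eventually (\<lambda>u. s \<le> ?G u) at_bot"
        by (simp add: always_eventually)
      then have "s \<le> 0"
        by (rule tendsto_lowerbound[OF cdf_lim_at_bot _ trivial_limit_at_bot_linorder])
      with s0 have "s = 0" by simp
      then show ?thesis using True unfolding C_def by simp
    next
      case False
      have cl: "closed C" unfolding C_def
        by (rule closed_Collect_le[OF cont continuous_on_const])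
      have bddC: "bdd_above C" using bdd by (auto simp: bdd_above_def)
      define c where "c = Sup C"
      have cC: "c \<in> C" unfolding c_def by (rule closed_contains_Sup[OF False bddC cl])
      have Ceq: "C = {..c}"
      proof
        show "C \<subseteq> {..c}" using cSup_upper[OF _ bddC] c_def by auto
        show "{..c} \<subseteq> C"
        proof
          fix u assume "u \<in> {..c}"
          then have "?G u \<le> ?G c" by (simp add: cdf_nondecreasing)
          also have "?G c \<le> s" using cC by (simp add: C_def)
          finally show "u \<in> C" by (simp add: C_def)
        qed
      qed
      have Gc: "?G c \<le> s" using cC C_def by simp
      have "eventually (\<lambda>u. s \<le> ?G u) (at_right c)"
      proof -
        have "eventually (\<lambda>u. c < u) (at_right c)" by (rule eventually_at_right_less)
        then show ?thesis
        proof (rule eventually_mono)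
          fix u assume "c < u"
          then have "u \<notin> C" using Ceq by auto
          then show "s \<le> ?G u" unfolding C_def by simp
        qed
      qed
      then have "s \<le> ?G c"
        using tendsto_lowerbound[OF cdf_is_right_cont[of c, unfolded continuous_within] _ trivial_limit_at_right_real] by simp
      with Gc have "?G c = s" by simp
      then show ?thesis using Ceq unfolding C_def by (simp add: cdf_def2)
    qed
  qed
qed



lemma measure_std_gauss_UNIV[simp]: "measure (std_gauss :: 'a::euclidean_space measure) UNIV = 1"
  using prob_space.prob_space[OF prob_std_gauss] by simp

lemma integral_const_gauss[simp]: "(\<integral>x. c \<partial>(std_gauss :: 'a::euclidean_space measure)) = (c::'b::{banach,second_countable_topology})"
  by simp

lemma psf_gauss: "pair_sigma_finite (std_gauss :: 'a::euclidean_space measure) (std_gauss :: 'b::euclidean_space measure)"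
  unfolding pair_sigma_finite_def using sf_std_gauss[where 'a='a] sf_std_gauss[where 'a='b] by blast

lemma gauss_eq_normal: "(std_gauss :: real measure) = density lborel (\<lambda>x. ennreal (normal_density 0 1 x))"
  unfolding std_gauss_def
proof (rule arg_cong[where f="density lborel"], rule ext)
  fix x :: real
  have "(2 * pi) powr (- real DIM(real) / 2) * exp (- (norm x)\<^sup>2 / 2) = gd1 x"
    by (simp add: gd1_def)
  then show "ennreal ((2 * pi) powr (- real DIM(real) / 2) * exp (- (norm x)\<^sup>2 / 2)) = ennreal (normal_density 0 1 x)"
    by (simp add: gd1_normal)
qed

lemma distr_gauss_fst: "distr ((std_gauss :: real measure) \<Otimes>\<^sub>M (std_gauss :: real measure)) lborel fst = std_gauss"
proof -
  have "distr ((std_gauss :: real measure) \<Otimes>\<^sub>M (std_gauss :: real measure)) lborel fst = distr ((std_gauss :: real measure) \<Otimes>\<^sub>M (std_gauss :: real measure)) std_gauss fst"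
    by (rule distr_cong) auto
  also have "\<dots> = std_gauss" by (rule prob_space.distr_pair_fst[OF prob_std_gauss])
  finally show ?thesis .
qed

lemma distr_gauss_snd: "distr ((std_gauss :: real measure) \<Otimes>\<^sub>M (std_gauss :: real measure)) lborel snd = std_gauss"
proof -
  interpret P: pair_sigma_finite "std_gauss :: real measure" "std_gauss :: real measure" by (rule psf_gauss)
  let ?M = "(std_gauss :: real measure) \<Otimes>\<^sub>M (std_gauss :: real measure)"
  have sw: "?M = distr ?M ?M (\<lambda>(x, y). (y, x))" by (rule P.distr_pair_swap)
  have "distr ?M lborel snd = distr (distr ?M ?M (\<lambda>(x, y). (y, x))) lborel fst"
    by (subst distr_distr) (auto simp: comp_def split_beta intro!: distr_cong)
  also have "\<dots> = distr ?M lborel fst" using sw by simp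
  finally show ?thesis using distr_gauss_fst by simp
qed

lemma gauss_rot:
  fixes H :: "real \<Rightarrow> real"
  assumes Hm[measurable]: "H \<in> borel_measurable borel" and Hb: "\<And>x. \<bar>H x\<bar> \<le> B" and t: "0 \<le> t"
  shows "(\<integral>y. (\<integral>w. H (exp (- t) * y + sqrt (1 - exp (- 2 * t)) * w) \<partial>std_gauss) \<partial>std_gauss) = (\<integral>v. H v \<partial>std_gauss)"
proof (cases "t = 0")
  case True
  then show ?thesis by simp
next
  case False
  with t have tp: "0 < t" by simp
  define a where "a = exp (- t)"
  define b where "b = sqrt (1 - exp (- 2 * t))"
  have ap: "0 < a" unfolding a_def by simp
  have e2: "exp (- 2 * t) < 1" using tp by simp
  have bp: "0 < b" unfolding b_def using e2 by simp
  have a2: "a\<^sup>2 = exp (- 2 * t)" unfolding a_def by (simp add: power2_eq_square exp_add[symmetric])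
  have b2: "b\<^sup>2 = 1 - exp (- 2 * t)" unfolding b_def using e2 by simp
  have ab: "sqrt (a\<^sup>2 + b\<^sup>2) = 1" using a2 b2 by simp
  let ?M = "(std_gauss :: real measure) \<Otimes>\<^sub>M (std_gauss :: real measure)"
  interpret P: pair_sigma_finite "std_gauss :: real measure" "std_gauss :: real measure" by (rule psf_gauss)
  interpret M: prob_space ?M by (rule prob_space_pair[OF prob_std_gauss prob_std_gauss])
  have df: "distributed ?M lborel fst (\<lambda>x. ennreal (normal_density 0 1 x))"
    unfolding distributed_def using distr_gauss_fst gauss_eq_normal by simp
  have ds: "distributed ?M lborel snd (\<lambda>x. ennreal (normal_density 0 1 x))"
    unfolding distributed_def using distr_gauss_snd gauss_eq_normal by simp
  have dfa: "distributed ?M lborel (\<lambda>x. a * fst x) (\<lambda>x. ennreal (normal_density 0 a x))"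
    using M.normal_density_affine[OF df, of a 0] ap by simp
  have dsb: "distributed ?M lborel (\<lambda>x. b * snd x) (\<lambda>x. ennreal (normal_density 0 b x))"
    using M.normal_density_affine[OF ds, of b 0] bp by simp
  have ind0: "M.indep_var borel fst borel snd"
  proof -
    have d1: "distr ?M borel fst = std_gauss"
      using distr_gauss_fst by (metis distr_cong sets_lborel)
    have d2: "distr ?M borel snd = std_gauss"
      using distr_gauss_snd by (metis distr_cong sets_lborel)
    have d3: "distr ?M (borel \<Otimes>\<^sub>M borel) (\<lambda>x. (fst x, snd x)) = ?M"
    proof -
      have "sets (borel \<Otimes>\<^sub>M borel) = sets ?M"
        by (rule sets_pair_measure_cong) auto
      then show ?thesis using distr_id2[of "borel \<Otimes>\<^sub>M borel" ?M] by simp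
    qed
    show ?thesis
      unfolding M.indep_var_distribution_eq d1 d2 d3 by simp
  qed
  have ind: "M.indep_var borel (\<lambda>x. a * fst x) borel (\<lambda>x. b * snd x)"
    using M.indep_var_compose[OF ind0, of "\<lambda>v. a * v" borel "\<lambda>v. b * v" borel]
    by (simp add: comp_def)
  have dsum: "distributed ?M lborel (\<lambda>x. a * fst x + b * snd x) (\<lambda>x. ennreal (normal_density 0 1 x))"
    using M.add_indep_normal[OF ind ap bp dfa dsb] ab by simp
  then have dz: "distr ?M lborel (\<lambda>x. a * fst x + b * snd x) = std_gauss"
    unfolding distributed_def gauss_eq_normal by simp
  have "(\<integral>v. H v \<partial>std_gauss) = (\<integral>v. H v \<partial>(distr ?M lborel (\<lambda>x. a * fst x + b * snd x)))"
    by (simp only: dz)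
  also have "\<dots> = (\<integral>z. H (a * fst z + b * snd z) \<partial>?M)"
    by (rule integral_distr) auto
  also have "\<dots> = (\<integral>y. (\<integral>w. H (a * y + b * w) \<partial>std_gauss) \<partial>std_gauss)"
  proof -
    have "integrable ?M (\<lambda>z. H (a * fst z + b * snd z))"
      by (rule M.integrable_const_bound[where B=B]) (auto simp: Hb)
    from P.integral_fst'[OF this] show ?thesis by simp
  qed
  finally show ?thesis unfolding a_def b_def ..
qed



definition rk :: "'k::finite \<Rightarrow> nat" where
  "rk = (SOME h. bij_betw h (UNIV::'k set) {0..<CARD('k)})"

lemma rk_bij: "bij_betw (rk :: 'k::finite \<Rightarrow> nat) UNIV {0..<CARD('k)}"
proof -
  have "\<exists>h. bij_betw h (UNIV::'k set) {0..<CARD('k)}" by (rule ex_bij_betw_finite_nat) simp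
  then show ?thesis unfolding rk_def by (rule someI_ex)
qed

lemma rk_inj: "inj (rk :: 'k::finite \<Rightarrow> nat)"
  using rk_bij bij_betw_def by blast

lemma rk_less: "rk (j::'k::finite) < CARD('k)"
  using rk_bij bij_betwE by fastforce

lemma rk_surj: "m < CARD('k::finite) \<Longrightarrow> \<exists>j::'k. rk j = m"
  using rk_bij unfolding bij_betw_def by (metis atLeastLessThan_iff image_iff zero_le)

definition cum :: "nat \<Rightarrow> real^'k::finite \<Rightarrow> real" where
  "cum m p = (\<Sum>i\<in>{i. rk i < m}. p$i)"

definition Gc :: "real \<Rightarrow> real" where "Gc = cdf (std_gauss :: real measure)"

definition Cnd :: "'k::finite \<Rightarrow> real^'k \<Rightarrow> real \<Rightarrow> bool" where
  "Cnd j p g \<longleftrightarrow> cum (rk j) p < g \<and> g \<le> cum (Suc (rk j)) p"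

definition phi :: "real^'k::finite \<Rightarrow> real \<Rightarrow> real^'k" where
  "phi p u = (\<Sum>j\<in>UNIV. indicator {u. Cnd j p (Gc u)} u *\<^sub>R axis j 1) + indicator {u. Gc u \<le> 0} u *\<^sub>R axis undefined 1"

lemma Gc_mono: "x \<le> y \<Longrightarrow> Gc x \<le> Gc y"
proof -
  interpret real_distribution "std_gauss :: real measure" by (rule real_dist_gauss)
  show "x \<le> y \<Longrightarrow> Gc x \<le> Gc y" unfolding Gc_def by (rule cdf_nondecreasing)
qed

lemma Gc_range: "0 \<le> Gc u" "Gc u \<le> 1"
proof -
  interpret real_distribution "std_gauss :: real measure" by (rule real_dist_gauss)
  show "0 \<le> Gc u" unfolding Gc_def by (rule cdf_nonneg)
  show "Gc u \<le> 1" unfolding Gc_def by (rule cdf_bounded_prob)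
qed

lemma Gc_meas[measurable]: "Gc \<in> borel_measurable borel"
  by (rule borel_measurable_mono) (auto simp: mono_def Gc_mono)

lemma Gc_meas'[measurable (raw)]: "f \<in> borel_measurable M \<Longrightarrow> (\<lambda>x. Gc (f x)) \<in> borel_measurable M"
  using measurable_compose[OF _ Gc_meas] by blast

lemma cum_meas[measurable]: "(\<lambda>p. cum m p) \<in> borel_measurable borel"
  unfolding cum_def by measurable

lemma cum_meas'[measurable (raw)]: "f \<in> borel_measurable M \<Longrightarrow> (\<lambda>x. cum m (f x)) \<in> borel_measurable M"
  using measurable_compose[OF _ cum_meas] by blast

lemma phi_if: "phi p u = (\<Sum>j\<in>UNIV. (if Cnd j p (Gc u) then 1 else 0) *\<^sub>R axis j 1) + (if Gc u \<le> 0 then 1 else 0) *\<^sub>R axis undefined 1"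
  unfolding phi_def indicator_def by (simp only: mem_Collect_eq of_bool_def)

lemma phi_meas[measurable (raw)]:
  assumes [measurable]: "F \<in> borel_measurable M" "Y \<in> borel_measurable M"
  shows "(\<lambda>z. phi (F z) (Y z)) \<in> borel_measurable M"
  unfolding phi_if Cnd_def by measurable

definition TT :: "(real^'k::finite) set" where
  "TT = {p. (\<forall>i. 0 \<le> p$i) \<and> (\<Sum>i\<in>UNIV. p$i) = 1}"

lemma simplex_TT: "simplex_k \<subseteq> TT"
  unfolding simplex_k_def
proof (rule hull_minimal)
  show "range (\<lambda>i. axis i 1) \<subseteq> (TT :: (real^'k) set)"
  proof
    fix v :: "real^'k" assume "v \<in> range (\<lambda>i. axis i 1)"
    then obtain i where v: "v = axis i 1" by auto
    have "(\<Sum>j\<in>UNIV. v$j) = (\<Sum>j\<in>UNIV. if j = i then 1 else 0)"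
      unfolding v by (rule sum.cong) (auto simp: axis_def)
    then show "v \<in> TT" unfolding TT_def v by (auto simp: axis_def)
  qed
  show "convex (TT :: (real^'k) set)"
    unfolding convex_def TT_def
  proof (intro ballI allI impI, clarify)
    fix x y :: "real^'k" and u v :: real
    assume x: "\<forall>i. 0 \<le> x$i" "(\<Sum>i\<in>UNIV. x$i) = 1" and y: "\<forall>i. 0 \<le> y$i" "(\<Sum>i\<in>UNIV. y$i) = 1"
      and uv: "0 \<le> u" "0 \<le> v" "u + v = 1"
    show "(\<forall>i. 0 \<le> (u *\<^sub>R x + v *\<^sub>R y) $ i) \<and> (\<Sum>i\<in>UNIV. (u *\<^sub>R x + v *\<^sub>R y) $ i) = 1"
    proof
      show "\<forall>i. 0 \<le> (u *\<^sub>R x + v *\<^sub>R y) $ i" using x y uv by simp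
      have "(\<Sum>i\<in>UNIV. (u *\<^sub>R x + v *\<^sub>R y) $ i) = u * (\<Sum>i\<in>UNIV. x$i) + v * (\<Sum>i\<in>UNIV. y$i)"
        by (simp add: sum.distrib sum_distrib_left)
      then show "(\<Sum>i\<in>UNIV. (u *\<^sub>R x + v *\<^sub>R y) $ i) = 1" using x y uv by simp
    qed
  qed
qed

lemma cum_mono: "p \<in> TT \<Longrightarrow> m \<le> m' \<Longrightarrow> cum m p \<le> cum m' p"
  unfolding cum_def TT_def by (intro sum_mono2) auto

lemma cum_0: "cum 0 p = 0" unfolding cum_def by simp

lemma cum_K: "p \<in> TT \<Longrightarrow> cum CARD('k) (p::real^'k::finite) = 1"
proof -
  have "{i::'k. rk i < CARD('k)} = UNIV" using rk_less by auto
  then show "p \<in> TT \<Longrightarrow> cum CARD('k) p = 1" unfolding cum_def TT_def by simp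
qed

lemma cum_range: "p \<in> TT \<Longrightarrow> 0 \<le> cum m p \<and> cum m (p::real^'k::finite) \<le> 1"
proof -
  assume p: "p \<in> TT"
  have "0 \<le> cum m p" using p unfolding cum_def TT_def by (auto intro: sum_nonneg)
  moreover have "cum m p \<le> cum CARD('k) p"
  proof -
    have "cum m p \<le> (\<Sum>i\<in>UNIV. p$i)" using p unfolding cum_def TT_def by (intro sum_mono2) auto
    also have "\<dots> = cum CARD('k) p" using cum_K[OF p] p unfolding TT_def by simp
    finally show ?thesis .
  qed
  ultimately show ?thesis using cum_K[OF p] by simp
qed

lemma cum_step: "cum (Suc (rk j)) p = cum (rk j) p + p$j"
proof -
  have "{i. rk i < Suc (rk j)} = insert j {i. rk i < rk j}"
    using rk_inj by (auto simp: less_Suc_eq dest: injD)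
  then show ?thesis unfolding cum_def by simp
qed

lemma Cnd_unique: "p \<in> TT \<Longrightarrow> Cnd i p g \<Longrightarrow> Cnd j p g \<Longrightarrow> i = j"
proof (rule ccontr)
  assume p: "p \<in> TT" and ci: "Cnd i p g" and cj: "Cnd j p g" and ne: "i \<noteq> j"
  have "rk i \<noteq> rk j" using ne rk_inj by (auto dest: injD)
  then have "rk i < rk j \<or> rk j < rk i" by auto
  then show False
  proof
    assume "rk i < rk j"
    then have "cum (Suc (rk i)) p \<le> cum (rk j) p" using cum_mono[OF p] by simp
    then show False using ci cj unfolding Cnd_def by simp
  next
    assume "rk j < rk i"
    then have "cum (Suc (rk j)) p \<le> cum (rk i) p" using cum_mono[OF p] by simp
    then show False using ci cj unfolding Cnd_def by simp
  qed
qed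

lemma Cnd_exists: "p \<in> TT \<Longrightarrow> 0 < g \<Longrightarrow> g \<le> 1 \<Longrightarrow> \<exists>j::'k::finite. Cnd j p g"
proof -
  assume p: "p \<in> TT" and g0: "0 < g" and g1: "g \<le> 1"
  define S where "S = {m. m \<le> CARD('k) \<and> cum m p < g}"
  have fS: "finite S" unfolding S_def by simp
  have 0: "0 \<in> S" unfolding S_def using g0 by (simp add: cum_0)
  define m where "m = Max S"
  have mS: "m \<in> S" unfolding m_def using fS 0 by (intro Max_in) auto
  have mK: "m < CARD('k)"
  proof -
    have "m \<le> CARD('k)" using mS S_def by simp
    moreover have "m \<noteq> CARD('k)" using mS cum_K[OF p] g1 unfolding S_def by auto
    ultimately show ?thesis by simp
  qed
  have "Suc m \<notin> S"
  proof
    assume "Suc m \<in> S"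
    then have "Suc m \<le> m" unfolding m_def using fS by (intro Max_ge) auto
    then show False by simp
  qed
  then have gs: "g \<le> cum (Suc m) p" using mK unfolding S_def by auto
  obtain j :: 'k where j: "rk j = m" using rk_surj[OF mK] by blast
  have "Cnd j p g" unfolding Cnd_def j using mS gs S_def by simp
  then show ?thesis by blast
qed

lemma phi_vertex:
  assumes p: "p \<in> TT"
  shows "phi p u \<in> vertices_k"
proof (cases "Gc u \<le> 0")
  case True
  have "\<not> Cnd j p (Gc u)" for j
    using True cum_range[OF p, of "rk j"] unfolding Cnd_def by auto
  then have "phi p u = axis undefined 1" unfolding phi_if using True by simp
  then show ?thesis unfolding vertices_k_def by simp
next
  case False
  then obtain j where j: "Cnd j p (Gc u)" using Cnd_exists[OF p, of "Gc u"] Gc_range by auto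
  have "(\<Sum>i\<in>UNIV. (if Cnd i p (Gc u) then 1 else 0) *\<^sub>R axis i (1::real)) = (\<Sum>i\<in>UNIV. if i = j then axis i 1 else 0)"
    by (rule sum.cong) (use j Cnd_unique[OF p] in auto)
  also have "\<dots> = axis j 1" by simp
  finally have "phi p u = axis j 1" unfolding phi_if using False by simp
  then show ?thesis unfolding vertices_k_def by simp
qed

lemma meas_Gc_le: "0 \<le> s \<Longrightarrow> s \<le> 1 \<Longrightarrow> measure std_gauss {u. Gc u \<le> s} = s"
  unfolding Gc_def by (rule cdf_uniform)

lemma phi_integral:
  fixes p :: "real^'k::finite"
  assumes p: "p \<in> TT"
  shows "(\<integral>u. phi p u \<partial>std_gauss) = p"
proof -
  interpret prob_space "std_gauss :: real measure" by (rule prob_std_gauss)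
  have Am: "{u. Cnd j p (Gc u)} \<in> sets std_gauss" for j
    unfolding Cnd_def by measurable
  have Bm: "{u. Gc u \<le> 0} \<in> sets std_gauss" by measurable
  have mA: "measure std_gauss {u. Cnd j p (Gc u)} = p$j" for j
  proof -
    have eq: "{u. Cnd j p (Gc u)} = {u. Gc u \<le> cum (Suc (rk j)) p} - {u. Gc u \<le> cum (rk j) p}"
      unfolding Cnd_def by auto
    have sub: "{u. Gc u \<le> cum (rk j) p} \<subseteq> {u. Gc u \<le> cum (Suc (rk j)) p}"
      using cum_mono[OF p, of "rk j" "Suc (rk j)"] by auto
    have "measure std_gauss {u. Cnd j p (Gc u)} = measure std_gauss {u. Gc u \<le> cum (Suc (rk j)) p} - measure std_gauss {u. Gc u \<le> cum (rk j) p}"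
      unfolding eq by (rule finite_measure_Diff[OF _ _ sub]) measurable
    also have "\<dots> = cum (Suc (rk j)) p - cum (rk j) p"
      using cum_range[OF p] by (simp add: meas_Gc_le)
    finally show ?thesis by (simp add: cum_step)
  qed
  have mB: "measure std_gauss {u. Gc u \<le> 0} = 0" by (simp add: meas_Gc_le)
  have intA: "integrable std_gauss (\<lambda>u. indicator {u. Cnd j p (Gc u)} u *\<^sub>R (axis j 1 :: real^'k))" for j
    using Am by (intro integrable_scaleR_left integrable_real_indicator) (auto simp: emeasure_eq_measure)
  have intB: "integrable std_gauss (\<lambda>u. indicator {u. Gc u \<le> 0} u *\<^sub>R (axis undefined 1 :: real^'k))"
    using Bm by (intro integrable_scaleR_left integrable_real_indicator) (auto simp: emeasure_eq_measure)
  have "(\<integral>u. phi p u \<partial>std_gauss) = (\<Sum>j\<in>UNIV. (\<integral>u. indicator {u. Cnd j p (Gc u)} u *\<^sub>R (axis j 1 :: real^'k) \<partial>std_gauss))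
        + (\<integral>u. indicator {u. Gc u \<le> 0} u *\<^sub>R (axis undefined 1 :: real^'k) \<partial>std_gauss)"
  proof -
    have intS: "integrable std_gauss (\<lambda>u. \<Sum>j\<in>UNIV. indicator {u. Cnd j p (Gc u)} u *\<^sub>R (axis j 1 :: real^'k))"
      by (rule Bochner_Integration.integrable_sum[where f="\<lambda>j u. indicator {u. Cnd j p (Gc u)} u *\<^sub>R (axis j 1 :: real^'k)"]) (rule intA)
    have "(\<integral>u. phi p u \<partial>std_gauss) = (\<integral>u. (\<Sum>j\<in>UNIV. indicator {u. Cnd j p (Gc u)} u *\<^sub>R (axis j 1 :: real^'k)) \<partial>std_gauss)
        + (\<integral>u. indicator {u. Gc u \<le> 0} u *\<^sub>R (axis undefined 1 :: real^'k) \<partial>std_gauss)"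
      unfolding phi_def by (rule Bochner_Integration.integral_add[OF intS intB])
    also have "(\<integral>u. (\<Sum>j\<in>UNIV. indicator {u. Cnd j p (Gc u)} u *\<^sub>R (axis j 1 :: real^'k)) \<partial>std_gauss)
        = (\<Sum>j\<in>UNIV. (\<integral>u. indicator {u. Cnd j p (Gc u)} u *\<^sub>R (axis j 1 :: real^'k) \<partial>std_gauss))"
      by (rule Bochner_Integration.integral_sum[where f="\<lambda>j u. indicator {u. Cnd j p (Gc u)} u *\<^sub>R (axis j 1 :: real^'k)"]) (rule intA)
    finally show ?thesis .
  qed
  also have "\<dots> = (\<Sum>j\<in>UNIV. p$j *\<^sub>R (axis j 1 :: real^'k))"
  proof -
    have iA: "(\<integral>u. indicator {u. Cnd j p (Gc u)} u *\<^sub>R (axis j 1 :: real^'k) \<partial>std_gauss) = p$j *\<^sub>R (axis j 1 :: real^'k)" for j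
    proof -
      have "(\<integral>u. indicator {u. Cnd j p (Gc u)} u *\<^sub>R (axis j 1 :: real^'k) \<partial>std_gauss) = (\<integral>u. indicator {u. Cnd j p (Gc u)} u \<partial>std_gauss) *\<^sub>R (axis j 1 :: real^'k)"
        by (rule integral_scaleR_left) (use Am in \<open>auto simp: emeasure_eq_measure\<close>)
      also have "(\<integral>u. indicator {u. Cnd j p (Gc u)} u \<partial>std_gauss) = p$j" using mA[of j] by simp
      finally show ?thesis .
    qed
    have iB: "(\<integral>u. indicator {u. Gc u \<le> 0} u *\<^sub>R (axis undefined 1 :: real^'k) \<partial>std_gauss) = 0"
    proof -
      have "(\<integral>u. indicator {u. Gc u \<le> 0} u *\<^sub>R (axis undefined 1 :: real^'k) \<partial>std_gauss) = (\<integral>u. indicator {u. Gc u \<le> 0} u \<partial>std_gauss) *\<^sub>R (axis undefined 1 :: real^'k)"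
        by (rule integral_scaleR_left) (use Bm in \<open>auto simp: emeasure_eq_measure\<close>)
      also have "(\<integral>u. indicator {u. Gc u \<le> 0} u \<partial>std_gauss) = (0::real)" using mB by simp
      finally show ?thesis by simp
    qed
    show ?thesis by (simp only: iA iB add_0_right)
  qed
  also have "\<dots> = p" using basis_expansion[of p] by (simp add: scalar_mult_eq_scaleR)
  finally show ?thesis .
qed



lemma psf_gen: "prob_space M \<Longrightarrow> prob_space N \<Longrightarrow> pair_sigma_finite M N"
  unfolding pair_sigma_finite_def by (simp add: prob_space_imp_sigma_finite)

lemma abs_int_le1:
  fixes f :: "'b \<Rightarrow> real"
  assumes P: "prob_space M" and fm: "f \<in> borel_measurable M" and b: "\<And>x. \<bar>f x\<bar> \<le> 1"
  shows "\<bar>\<integral>x. f x \<partial>M\<bar> \<le> 1"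
proof -
  interpret prob_space M by (rule P)
  have i: "integrable M f" by (rule integrable_const_bound[where B=1]) (use b fm in auto)
  have "(\<integral>x. f x \<partial>M) \<le> 1" by (rule integral_le_const[OF i]) (use b abs_le_D1 in auto)
  moreover have "-1 \<le> (\<integral>x. f x \<partial>M)" by (rule integral_ge_const[OF i]) (use b abs_le_D2 in force)
  ultimately show ?thesis by simp
qed

lemma vec_nth_meas[measurable (raw)]:
  fixes F :: "'b \<Rightarrow> real^'k::finite"
  shows "F \<in> borel_measurable M \<Longrightarrow> (\<lambda>z. F z $ l) \<in> borel_measurable M"
  using measurable_compose[of F M borel "\<lambda>v. v $ l" borel]
    borel_measurable_continuous_onI[OF linear_continuous_on[OF bounded_linear_vec_nth]]
  by blast

lemma vert_norm: "v \<in> vertices_k \<Longrightarrow> norm v = 1"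
  unfolding vertices_k_def by auto

lemma vert_comp: "v \<in> vertices_k \<Longrightarrow> \<bar>v $ l\<bar> \<le> 1"
  unfolding vertices_k_def by (auto simp: axis_def)

lemma int_fst_gauss:
  fixes h :: "real \<Rightarrow> 'b::{banach,second_countable_topology}"
  assumes [measurable]: "h \<in> borel_measurable borel"
  shows "(\<integral>w. h (fst w) \<partial>((std_gauss :: real measure) \<Otimes>\<^sub>M (std_gauss :: real measure))) = (\<integral>u. h u \<partial>std_gauss)"
proof -
  have "(\<integral>u. h u \<partial>std_gauss) = (\<integral>u. h u \<partial>(distr ((std_gauss :: real measure) \<Otimes>\<^sub>M (std_gauss :: real measure)) lborel fst))"
    by (simp only: distr_gauss_fst)
  also have "\<dots> = (\<integral>w. h (fst w) \<partial>((std_gauss :: real measure) \<Otimes>\<^sub>M (std_gauss :: real measure)))"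
    by (rule integral_distr) auto
  finally show ?thesis ..
qed

lemma int_snd_gauss:
  fixes h :: "real \<Rightarrow> 'b::{banach,second_countable_topology}"
  assumes [measurable]: "h \<in> borel_measurable borel"
  shows "(\<integral>w. h (snd w) \<partial>((std_gauss :: real measure) \<Otimes>\<^sub>M (std_gauss :: real measure))) = (\<integral>u. h u \<partial>std_gauss)"
proof -
  have "(\<integral>u. h u \<partial>std_gauss) = (\<integral>u. h u \<partial>(distr ((std_gauss :: real measure) \<Otimes>\<^sub>M (std_gauss :: real measure)) lborel snd))"
    by (simp only: distr_gauss_snd)
  also have "\<dots> = (\<integral>w. h (snd w) \<partial>((std_gauss :: real measure) \<Otimes>\<^sub>M (std_gauss :: real measure)))"
    by (rule integral_distr) auto
  finally show ?thesis ..
qed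

lemma phi_comp:
  fixes p :: "real^'k::finite"
  assumes p: "p \<in> TT"
  shows "(\<integral>u. phi p u $ l \<partial>std_gauss) = p $ l"
proof -
  interpret prob_space "std_gauss :: real measure" by (rule prob_std_gauss)
  have i: "integrable std_gauss (phi p)"
    by (rule integrable_const_bound[where B=1]) (auto simp: vert_norm[OF phi_vertex[OF p]])
  have "(\<integral>u. phi p u $ l \<partial>std_gauss) = (\<integral>u. phi p u \<partial>std_gauss) $ l"
    by (rule integral_bounded_linear[OF bounded_linear_vec_nth i])
  then show ?thesis using phi_integral[OF p] by simp
qed

lemma gX: "(std_gauss :: ('a::euclidean_space \<times> real \<times> real) measure) =
  (std_gauss :: 'a measure) \<Otimes>\<^sub>M ((std_gauss :: real measure) \<Otimes>\<^sub>M (std_gauss :: real measure))"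
  using std_gauss_prod[where 'a='a and 'b="real \<times> real"] std_gauss_prod[where 'a=real and 'b=real] by simp

lemma sets_X: "sets ((std_gauss :: 'a::euclidean_space measure) \<Otimes>\<^sub>M ((std_gauss :: real measure) \<Otimes>\<^sub>M (std_gauss :: real measure)))
   = sets (borel :: ('a \<times> real \<times> real) measure)"
  using sets_std_gauss[where 'a="'a \<times> real \<times> real"] unfolding gX .

lemma f2_meas:
  fixes f1 :: "'a::euclidean_space \<Rightarrow> real^'k::finite"
  assumes f1m: "f1 \<in> borel_measurable borel"
  shows "(\<lambda>z::'a \<times> real \<times> real. phi (f1 (fst z)) (fst (snd z))) \<in> borel_measurable borel"
    "(\<lambda>z::'a \<times> real \<times> real. phi (f1 (fst z)) (snd (snd z))) \<in> borel_measurable borel"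
proof -
  have [measurable]: "f1 \<in> borel_measurable (std_gauss :: 'a measure)"
    using f1m measurable_cong_sets[OF sets_std_gauss refl] by blast
  have "(\<lambda>z::'a \<times> real \<times> real. phi (f1 (fst z)) (fst (snd z))) \<in> borel_measurable ((std_gauss :: 'a measure) \<Otimes>\<^sub>M ((std_gauss :: real measure) \<Otimes>\<^sub>M (std_gauss :: real measure)))"
    by measurable
  then show "(\<lambda>z::'a \<times> real \<times> real. phi (f1 (fst z)) (fst (snd z))) \<in> borel_measurable borel"
    using measurable_cong_sets[OF sets_X refl] by blast
  have "(\<lambda>z::'a \<times> real \<times> real. phi (f1 (fst z)) (snd (snd z))) \<in> borel_measurable ((std_gauss :: 'a measure) \<Otimes>\<^sub>M ((std_gauss :: real measure) \<Otimes>\<^sub>M (std_gauss :: real measure)))"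
    by measurable
  then show "(\<lambda>z::'a \<times> real \<times> real. phi (f1 (fst z)) (snd (snd z))) \<in> borel_measurable borel"
    using measurable_cong_sets[OF sets_X refl] by blast
qed


lemma f2_mean:
  fixes f1 :: "'a::euclidean_space \<Rightarrow> real^'k::finite"
  assumes f1m: "f1 \<in> borel_measurable borel" and f1s: "\<And>x. f1 x \<in> TT"
  shows "(\<integral>z. phi (f1 (fst z)) (fst (snd z)) \<partial>(std_gauss :: ('a \<times> real \<times> real) measure)) = (\<integral>x. f1 x \<partial>std_gauss)"
    and "(\<integral>z. phi (f1 (fst z)) (snd (snd z)) \<partial>(std_gauss :: ('a \<times> real \<times> real) measure)) = (\<integral>x. f1 x \<partial>std_gauss)"
proof -
  let ?R = "(std_gauss :: real measure) \<Otimes>\<^sub>M (std_gauss :: real measure)"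
  interpret PA: pair_sigma_finite "std_gauss :: 'a measure" ?R
    by (rule psf_gen[OF prob_std_gauss prob_space_pair[OF prob_std_gauss prob_std_gauss]])
  interpret PX: prob_space "(std_gauss :: 'a measure) \<Otimes>\<^sub>M ?R"
    by (rule prob_space_pair[OF prob_std_gauss prob_space_pair[OF prob_std_gauss prob_std_gauss]])
  have [measurable]: "f1 \<in> borel_measurable (std_gauss :: 'a measure)"
    using f1m measurable_cong_sets[OF sets_std_gauss refl] by blast
  have phm: "(\<lambda>u. phi p u) \<in> borel_measurable borel" for p :: "real^'k" by measurable
  have i1: "integrable ((std_gauss :: 'a measure) \<Otimes>\<^sub>M ?R) (\<lambda>z. phi (f1 (fst z)) (fst (snd z)))"
    apply (rule PX.integrable_const_bound[where B=1])
    apply (simp add: vert_norm[OF phi_vertex[OF f1s]])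
    apply measurable
    done
  have i2: "integrable ((std_gauss :: 'a measure) \<Otimes>\<^sub>M ?R) (\<lambda>z. phi (f1 (fst z)) (snd (snd z)))"
    apply (rule PX.integrable_const_bound[where B=1])
    apply (simp add: vert_norm[OF phi_vertex[OF f1s]])
    apply measurable
    done
  have "(\<integral>z. phi (f1 (fst z)) (fst (snd z)) \<partial>(std_gauss :: ('a \<times> real \<times> real) measure)) = (\<integral>z. phi (f1 (fst z)) (fst (snd z)) \<partial>((std_gauss :: 'a measure) \<Otimes>\<^sub>M ?R))"
    by (simp only: gX)
  also have "\<dots> = (\<integral>x. (\<integral>w. phi (f1 x) (fst w) \<partial>?R) \<partial>std_gauss)"
    using PA.integral_fst'[OF i1] by simp
  also have "\<dots> = (\<integral>x. f1 x \<partial>std_gauss)"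
  proof (rule Bochner_Integration.integral_cong[OF refl])
    fix x :: 'a
    show "(\<integral>w. phi (f1 x) (fst w) \<partial>?R) = f1 x"
      using int_fst_gauss[OF phm[of "f1 x"]] phi_integral[OF f1s] by simp
  qed
  finally show "(\<integral>z. phi (f1 (fst z)) (fst (snd z)) \<partial>(std_gauss :: ('a \<times> real \<times> real) measure)) = (\<integral>x. f1 x \<partial>std_gauss)" .
  have "(\<integral>z. phi (f1 (fst z)) (snd (snd z)) \<partial>(std_gauss :: ('a \<times> real \<times> real) measure)) = (\<integral>z. phi (f1 (fst z)) (snd (snd z)) \<partial>((std_gauss :: 'a measure) \<Otimes>\<^sub>M ?R))"
    by (simp only: gX)
  also have "\<dots> = (\<integral>x. (\<integral>w. phi (f1 x) (snd w) \<partial>?R) \<partial>std_gauss)"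
    using PA.integral_fst'[OF i2] by simp
  also have "\<dots> = (\<integral>x. f1 x \<partial>std_gauss)"
  proof (rule Bochner_Integration.integral_cong[OF refl])
    fix x :: 'a
    show "(\<integral>w. phi (f1 x) (snd w) \<partial>?R) = f1 x"
      using int_snd_gauss[OF phm[of "f1 x"]] phi_integral[OF f1s] by simp
  qed
  finally show "(\<integral>z. phi (f1 (fst z)) (snd (snd z)) \<partial>(std_gauss :: ('a \<times> real \<times> real) measure)) = (\<integral>x. f1 x \<partial>std_gauss)" .
qed

lemma OU_g2:
  fixes g1 :: "'a::euclidean_space \<Rightarrow> real^'k::finite" and x :: 'a
  assumes g1m: "g1 \<in> borel_measurable borel" and g1s: "\<And>x. g1 x \<in> TT"
  shows "OU t (\<lambda>y::'a \<times> real \<times> real. phi (g1 (fst y)) (snd (snd y)) $ l) (x, y1, y2) =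
    (\<integral>x'. (\<integral>w. phi (g1 (exp (- t) *\<^sub>R x + sqrt (1 - exp (- 2 * t)) *\<^sub>R x')) (exp (- t) * y2 + sqrt (1 - exp (- 2 * t)) * w) $ l \<partial>std_gauss) \<partial>std_gauss)"
proof -
  define e where "e = exp (- t)"
  define s where "s = sqrt (1 - exp (- 2 * t))"
  define Q where "Q = (\<lambda>x' w. phi (g1 (e *\<^sub>R x + s *\<^sub>R x')) (e * y2 + s * w) $ l)"
  let ?R = "(std_gauss :: real measure) \<Otimes>\<^sub>M (std_gauss :: real measure)"
  interpret PA: pair_sigma_finite "std_gauss :: 'a measure" ?R
    by (rule psf_gen[OF prob_std_gauss prob_space_pair[OF prob_std_gauss prob_std_gauss]])
  interpret PX: prob_space "(std_gauss :: 'a measure) \<Otimes>\<^sub>M ?R"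
    by (rule prob_space_pair[OF prob_std_gauss prob_space_pair[OF prob_std_gauss prob_std_gauss]])
  have [measurable]: "g1 \<in> borel_measurable (std_gauss :: 'a measure)"
    using g1m measurable_cong_sets[OF sets_std_gauss refl] by blast
  note g1m[measurable]
  have Qm: "(\<lambda>z. Q (fst z) (snd (snd z))) \<in> borel_measurable ((std_gauss :: 'a measure) \<Otimes>\<^sub>M ?R)"
    unfolding Q_def by measurable
  have Qm2: "(\<lambda>w. Q x' w) \<in> borel_measurable borel" for x'
    unfolding Q_def by measurable
  have Qb: "\<bar>Q a b\<bar> \<le> 1" for a b unfolding Q_def by (rule vert_comp[OF phi_vertex[OF g1s]])
  have i1: "integrable ((std_gauss :: 'a measure) \<Otimes>\<^sub>M ?R) (\<lambda>z. Q (fst z) (snd (snd z)))"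
    by (rule PX.integrable_const_bound[where B=1]) (simp_all add: Qb Qm)
  have "OU t (\<lambda>y::'a \<times> real \<times> real. phi (g1 (fst y)) (snd (snd y)) $ l) (x, y1, y2) =
      (\<integral>z. Q (fst z) (snd (snd z)) \<partial>(std_gauss :: ('a \<times> real \<times> real) measure))"
    unfolding OU_def Q_def e_def s_def by simp
  also have "\<dots> = (\<integral>z. Q (fst z) (snd (snd z)) \<partial>((std_gauss :: 'a measure) \<Otimes>\<^sub>M ?R))"
    by (simp only: gX)
  also have "\<dots> = (\<integral>x'. (\<integral>w. Q x' (snd w) \<partial>?R) \<partial>std_gauss)"
    using PA.integral_fst'[OF i1] by simp
  also have "\<dots> = (\<integral>x'. (\<integral>w. Q x' w \<partial>std_gauss) \<partial>std_gauss)"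
    by (rule Bochner_Integration.integral_cong[OF refl]) (rule int_snd_gauss[OF Qm2])
  finally show ?thesis unfolding Q_def e_def s_def .
qed

lemma corr:
  fixes f1 g1 :: "'a::euclidean_space \<Rightarrow> real^'k::finite"
  assumes f1m: "f1 \<in> borel_measurable borel" and f1s: "\<And>x. f1 x \<in> TT"
    and g1m: "g1 \<in> borel_measurable borel" and g1s: "\<And>x. g1 x \<in> TT"
    and t: "0 \<le> t"
  shows "(\<integral>x. f1 x $ j * OU t (\<lambda>y. g1 y $ l) x \<partial>std_gauss) =
     (\<integral>z. phi (f1 (fst z)) (fst (snd z)) $ j * OU t (\<lambda>y::'a \<times> real \<times> real. phi (g1 (fst y)) (snd (snd y)) $ l) z \<partial>std_gauss)"
proof -
  define e where "e = exp (- t)"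
  define s where "s = sqrt (1 - exp (- 2 * t))"
  define Kf where "Kf = (\<lambda>(x::'a) (y2::real). \<integral>x'. (\<integral>w. phi (g1 (e *\<^sub>R x + s *\<^sub>R x')) (e * y2 + s * w) $ l \<partial>(std_gauss :: real measure)) \<partial>(std_gauss :: 'a measure))"
  define k where "k = (\<lambda>x. OU t (\<lambda>y. g1 y $ l) x)"
  let ?R = "(std_gauss :: real measure) \<Otimes>\<^sub>M (std_gauss :: real measure)"
  interpret GA: sigma_finite_measure "std_gauss :: 'a measure" by (rule sf_std_gauss)
  interpret G1: sigma_finite_measure "std_gauss :: real measure" by (rule sf_std_gauss)
  interpret PA: pair_sigma_finite "std_gauss :: 'a measure" ?R
    by (rule psf_gen[OF prob_std_gauss prob_space_pair[OF prob_std_gauss prob_std_gauss]])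
  interpret PX: prob_space "(std_gauss :: 'a measure) \<Otimes>\<^sub>M ?R"
    by (rule prob_space_pair[OF prob_std_gauss prob_space_pair[OF prob_std_gauss prob_std_gauss]])
  interpret PR: pair_sigma_finite "std_gauss :: real measure" "std_gauss :: real measure"
    by (rule psf_gen[OF prob_std_gauss prob_std_gauss])
  interpret PRp: prob_space ?R
    by (rule prob_space_pair[OF prob_std_gauss prob_std_gauss])
  interpret P1A: pair_sigma_finite "std_gauss :: 'a measure" "std_gauss :: real measure"
    by (rule psf_gen[OF prob_std_gauss prob_std_gauss])
  interpret P1Ap: prob_space "(std_gauss :: 'a measure) \<Otimes>\<^sub>M (std_gauss :: real measure)"
    by (rule prob_space_pair[OF prob_std_gauss prob_std_gauss])
  have [measurable]: "g1 \<in> borel_measurable (std_gauss :: 'a measure)"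
    using g1m measurable_cong_sets[OF sets_std_gauss refl] by blast
  have [measurable]: "f1 \<in> borel_measurable (std_gauss :: 'a measure)"
    using f1m measurable_cong_sets[OF sets_std_gauss refl] by blast
  note g1m[measurable] f1m[measurable]
  have OUg: "OU t (\<lambda>y::'a \<times> real \<times> real. phi (g1 (fst y)) (snd (snd y)) $ l) z = Kf (fst z) (snd (snd z))" for z
  proof -
    obtain x y1 y2 where z: "z = (x, y1, y2)" by (cases z) auto
    show ?thesis unfolding z Kf_def e_def s_def using OU_g2[OF g1m g1s, of t l x y1 y2] by simp
  qed
  have inb: "\<bar>\<integral>w. phi (g1 (e *\<^sub>R x + s *\<^sub>R x')) (e * y2 + s * w) $ l \<partial>(std_gauss :: real measure)\<bar> \<le> 1" for x x' y2
    by (rule abs_int_le1[OF prob_std_gauss]) (measurable, rule vert_comp[OF phi_vertex[OF g1s]])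
  have Kfb: "\<bar>Kf a b\<bar> \<le> 1" for a b
    unfolding Kf_def by (rule abs_int_le1[OF prob_std_gauss]) (measurable, rule inb)
  have KB: "(\<integral>y2. Kf x y2 \<partial>std_gauss) = k x" for x
  proof -
    define F where "F = (\<lambda>y2 x'. \<integral>w. phi (g1 (e *\<^sub>R x + s *\<^sub>R x')) (e * y2 + s * w) $ l \<partial>(std_gauss :: real measure))"
    have iF: "integrable ((std_gauss :: 'a measure) \<Otimes>\<^sub>M (std_gauss :: real measure)) (\<lambda>(x', y2). F y2 x')"
      apply (rule P1Ap.integrable_const_bound[where B=1])
      apply (simp add: F_def split_beta inb)
      apply (unfold F_def)
      apply measurable
      done
    have "(\<integral>y2. Kf x y2 \<partial>std_gauss) = (\<integral>y2. (\<integral>x'. F y2 x' \<partial>(std_gauss :: 'a measure)) \<partial>(std_gauss :: real measure))"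
      unfolding Kf_def F_def ..
    also have "\<dots> = (\<integral>x'. (\<integral>y2. F y2 x' \<partial>(std_gauss :: real measure)) \<partial>(std_gauss :: 'a measure))"
      by (rule P1A.Fubini_integral[OF iF])
    also have "\<dots> = (\<integral>x'. g1 (e *\<^sub>R x + s *\<^sub>R x') $ l \<partial>(std_gauss :: 'a measure))"
    proof (rule Bochner_Integration.integral_cong[OF refl])
      fix x' :: 'a
      have "(\<integral>y2. F y2 x' \<partial>(std_gauss :: real measure)) = (\<integral>v. phi (g1 (e *\<^sub>R x + s *\<^sub>R x')) v $ l \<partial>std_gauss)"
        unfolding F_def e_def s_def
        by (rule gauss_rot[OF _ _ t]) (measurable, rule vert_comp[OF phi_vertex[OF g1s]])
      also have "\<dots> = g1 (e *\<^sub>R x + s *\<^sub>R x') $ l" by (rule phi_comp[OF g1s])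
      finally show "(\<integral>y2. F y2 x' \<partial>(std_gauss :: real measure)) = g1 (e *\<^sub>R x + s *\<^sub>R x') $ l" .
    qed
    also have "\<dots> = k x" unfolding k_def OU_def e_def s_def ..
    finally show ?thesis .
  qed
  have i2: "integrable ((std_gauss :: 'a measure) \<Otimes>\<^sub>M ?R) (\<lambda>z. phi (f1 (fst z)) (fst (snd z)) $ j * Kf (fst z) (snd (snd z)))"
    apply (rule PX.integrable_const_bound[where B=1])
    apply (simp add: abs_mult)
    apply (intro AE_I2 mult_le_one vert_comp[OF phi_vertex[OF f1s]] abs_ge_zero Kfb)
    apply (unfold Kf_def)
    apply measurable
    done
  have "(\<integral>z. phi (f1 (fst z)) (fst (snd z)) $ j * OU t (\<lambda>y::'a \<times> real \<times> real. phi (g1 (fst y)) (snd (snd y)) $ l) z \<partial>std_gauss)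
      = (\<integral>z. phi (f1 (fst z)) (fst (snd z)) $ j * Kf (fst z) (snd (snd z)) \<partial>(std_gauss :: ('a \<times> real \<times> real) measure))"
    by (simp only: OUg)
  also have "\<dots> = (\<integral>z. phi (f1 (fst z)) (fst (snd z)) $ j * Kf (fst z) (snd (snd z)) \<partial>((std_gauss :: 'a measure) \<Otimes>\<^sub>M ?R))"
    by (simp only: gX)
  also have "\<dots> = (\<integral>x. (\<integral>w. phi (f1 x) (fst w) $ j * Kf x (snd w) \<partial>?R) \<partial>std_gauss)"
    using PA.integral_fst'[OF i2] by simp
  also have "\<dots> = (\<integral>x. f1 x $ j * k x \<partial>std_gauss)"
  proof (rule Bochner_Integration.integral_cong[OF refl])
    fix x :: 'a
    have iw: "integrable ?R (\<lambda>w. phi (f1 x) (fst w) $ j * Kf x (snd w))"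
      apply (rule PRp.integrable_const_bound[where B=1])
      apply (simp add: abs_mult)
      apply (intro AE_I2 mult_le_one vert_comp[OF phi_vertex[OF f1s]] abs_ge_zero Kfb)
      apply (unfold Kf_def)
      apply measurable
      done
    have "(\<integral>w. phi (f1 x) (fst w) $ j * Kf x (snd w) \<partial>?R) = (\<integral>y1. (\<integral>y2. phi (f1 x) y1 $ j * Kf x y2 \<partial>std_gauss) \<partial>std_gauss)"
      using PR.integral_fst'[OF iw] by simp
    also have "\<dots> = (\<integral>y1. phi (f1 x) y1 $ j * k x \<partial>std_gauss)"
      by (simp add: KB)
    also have "\<dots> = f1 x $ j * k x"
      using phi_comp[OF f1s] by simp
    finally show "(\<integral>w. phi (f1 x) (fst w) $ j * Kf x (snd w) \<partial>?R) = f1 x $ j * k x" .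
  qed
  finally show ?thesis unfolding k_def ..
qed


theorem lemma3:
  fixes k_type :: "'k::finite itself" and n_type :: "'a::euclidean_space itself"
  shows "\<exists>(\<Phi> :: ('a \<Rightarrow> real ^ 'k) \<Rightarrow> ('a \<times> real \<times> real \<Rightarrow> real ^ 'k))
           (\<Psi> :: ('a \<Rightarrow> real ^ 'k) \<Rightarrow> ('a \<times> real \<times> real \<Rightarrow> real ^ 'k)).
     \<forall>f1 g1 :: 'a \<Rightarrow> real ^ 'k.
       f1 \<in> borel_measurable borel \<and> g1 \<in> borel_measurable borel \<and>
       (\<forall>x. f1 x \<in> simplex_k) \<and> (\<forall>x. g1 x \<in> simplex_k) \<longrightarrow>
       (let f2 = \<Phi> f1; g2 = \<Psi> g1 in
         f2 \<in> borel_measurable borel \<and> g2 \<in> borel_measurable borel \<and>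
         (\<forall>x. f2 x \<in> vertices_k) \<and> (\<forall>x. g2 x \<in> vertices_k) \<and>
         (\<integral>x. f2 x \<partial>std_gauss) = (\<integral>x. f1 x \<partial>std_gauss) \<and>
         (\<integral>x. g2 x \<partial>std_gauss) = (\<integral>x. g1 x \<partial>std_gauss) \<and>
         (\<forall>t\<ge>0. \<forall>j l.
            (\<integral>x. f1 x $ j * OU t (\<lambda>y. g1 y $ l) x \<partial>std_gauss) =
            (\<integral>x. f2 x $ j * OU t (\<lambda>y. g2 y $ l) x \<partial>std_gauss)))"
proof -
  let ?P = "\<lambda>(f1::'a \<Rightarrow> real^'k) (z::'a \<times> real \<times> real). phi (f1 (fst z)) (fst (snd z))"
  let ?Q = "\<lambda>(g1::'a \<Rightarrow> real^'k) (z::'a \<times> real \<times> real). phi (g1 (fst z)) (snd (snd z))"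
  show ?thesis
  proof (rule exI[of _ ?P], rule exI[of _ ?Q], intro allI impI)
    fix f1 g1 :: "'a \<Rightarrow> real^'k"
    assume H: "f1 \<in> borel_measurable borel \<and> g1 \<in> borel_measurable borel \<and>
       (\<forall>x. f1 x \<in> simplex_k) \<and> (\<forall>x. g1 x \<in> simplex_k)"
    then have f1m: "f1 \<in> borel_measurable borel" and g1m: "g1 \<in> borel_measurable borel" by auto
    have f1s: "\<And>x. f1 x \<in> TT" using H simplex_TT by blast
    have g1s: "\<And>x. g1 x \<in> TT" using H simplex_TT by blast
    show "let f2 = ?P f1; g2 = ?Q g1 in
         f2 \<in> borel_measurable borel \<and> g2 \<in> borel_measurable borel \<and>
         (\<forall>x. f2 x \<in> vertices_k) \<and> (\<forall>x. g2 x \<in> vertices_k) \<and>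
         (\<integral>x. f2 x \<partial>std_gauss) = (\<integral>x. f1 x \<partial>std_gauss) \<and>
         (\<integral>x. g2 x \<partial>std_gauss) = (\<integral>x. g1 x \<partial>std_gauss) \<and>
         (\<forall>t\<ge>0. \<forall>j l.
            (\<integral>x. f1 x $ j * OU t (\<lambda>y. g1 y $ l) x \<partial>std_gauss) =
            (\<integral>x. f2 x $ j * OU t (\<lambda>y. g2 y $ l) x \<partial>std_gauss))"
      unfolding Let_def
    proof (intro conjI allI impI)
      show "(\<lambda>z::'a \<times> real \<times> real. phi (f1 (fst z)) (fst (snd z))) \<in> borel_measurable borel"
        by (rule f2_meas(1)[OF f1m])
      show "(\<lambda>z::'a \<times> real \<times> real. phi (g1 (fst z)) (snd (snd z))) \<in> borel_measurable borel"
        by (rule f2_meas(2)[OF g1m])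
      show "phi (f1 (fst x)) (fst (snd x)) \<in> vertices_k" for x :: "'a \<times> real \<times> real"
        by (rule phi_vertex[OF f1s])
      show "phi (g1 (fst x)) (snd (snd x)) \<in> vertices_k" for x :: "'a \<times> real \<times> real"
        by (rule phi_vertex[OF g1s])
      show "(\<integral>z. phi (f1 (fst z)) (fst (snd z)) \<partial>(std_gauss :: ('a \<times> real \<times> real) measure)) = (\<integral>x. f1 x \<partial>std_gauss)"
        by (rule f2_mean(1)[OF f1m f1s])
      show "(\<integral>z. phi (g1 (fst z)) (snd (snd z)) \<partial>(std_gauss :: ('a \<times> real \<times> real) measure)) = (\<integral>x. g1 x \<partial>std_gauss)"
        by (rule f2_mean(2)[OF g1m g1s])
      show "(\<integral>x. f1 x $ j * OU t (\<lambda>y. g1 y $ l) x \<partial>std_gauss) =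
          (\<integral>z. phi (f1 (fst z)) (fst (snd z)) $ j * OU t (\<lambda>y::'a \<times> real \<times> real. phi (g1 (fst y)) (snd (snd y)) $ l) z \<partial>std_gauss)"
        if "0 \<le> t" for t j l
        by (rule corr[OF f1m f1s g1m g1s that])
    qed
  qed
qed

end
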